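(* Let $N,K,F\in\mathbb{Z}^+$ and let $\boldsymbol{\alpha}=[\alpha_1,\ldots,\alpha_F]$ be positive rationals with $\sum_{f=1}^F\alpha_f=1$ and $\alpha_f L\in\mathbb{Z}^+$ for all $f$. Split each of the $K$ independent $L$-bit messages $W_1,\ldots,W_K$ into $F$ disjoint sub-messages $W_k=(W_{k,1},\ldots,W_{k,F})$ with $|W_{k,f}|=\alpha_f L$ bits, and store the sub-message set $\mathcal{M}_f=\bigcup_{k\in[K]}W_{k,f}$ (uncoded) at every database of a non-empty set $\mathcal{N}_f\subseteq[N]$, $f\in[F]$. Suppose that for each $f\in[F]$ a full-storage PIR scheme with achievable rate $R_f$ is used by the user to privately download $W_{\theta,f}$ from the databases in $\mathcal{N}_f$, where $W_\theta$, $\theta\in[K]$, is the desired message. Then the resulting scheme privately retrieves $W_\theta$ from the $N$ storage-constrained databases with rate $$R=\left(\frac{\alpha_1}{R_1}+\frac{\alpha_2}{R_2}+\cdots+\frac{\alpha_F}{R_F}\right)^{-1}.$$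
   Context: Private information retrieval (PIR) setting: $K$ independent messages $W_1,\ldots,W_K$, each uniformly of $L$ bits, are stored uncoded among $N$ non-colluding databases (DBs). A user wanting $W_\theta$ sends queries (independent of the messages) to the DBs; each DB answers as a deterministic function of its stored content and its query; the user must recover $W_\theta$ with zero error from all answers; privacy means that for every DB $n$, the index $\theta$ is independent of that DB's query, answer, all messages and all storage contents. The rate of a scheme is $R=L/D$ where $D$ is the total number of downloaded bits. A full-storage PIR (FS-PIR) scheme is a PIR scheme for a set of databases each of which stores all the messages in question (here: every DB in $\mathcal{N}_f$ stores all of $W_{1,f},\ldots,W_{K,f}$); its rate $R_f$ is the ratio of the size of the desired sub-message to the number of downloaded bits. *)

theory Defs
  imports "HOL-Probability.Probability"
begin

(* Indexing conventions (0-based): messages k < K, databases n < N, sub-messages f < F. *)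

definition msgs :: "nat \<Rightarrow> nat \<Rightarrow> bool list list set" where
  "msgs K L = {Ws. length Ws = K \<and> (\<forall>w\<in>set Ws. length w = L)}"

definition msg_pmf :: "nat \<Rightarrow> nat \<Rightarrow> bool list list pmf" where
  "msg_pmf K L = pmf_of_set (msgs K L)"

(* A PIR scheme: the user draws a private key (randomness, may depend on theta) independent of the
   messages; the query sent to DB n is a function of the key; DB n answers deterministically from
   its stored content and its query; the user decodes from theta, its key and all answers. *)
record ('k, 'q, 's, 'a) pir =
  key :: "nat \<Rightarrow> 'k pmf"
  qry :: "nat \<Rightarrow> 'k \<Rightarrow> 'q"
  ans :: "nat \<Rightarrow> 's \<Rightarrow> 'q \<Rightarrow> 'a"
  dec :: "nat \<Rightarrow> 'k \<Rightarrow> (nat \<Rightarrow> 'a option) \<Rightarrow> bool list"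

definition answers ::
  "nat set \<Rightarrow> (nat \<Rightarrow> bool list list \<Rightarrow> 's) \<Rightarrow> ('k,'q,'s,'a) pir
     \<Rightarrow> bool list list \<Rightarrow> 'k \<Rightarrow> nat \<Rightarrow> 'a option" where
  "answers Ns store S W k = (\<lambda>n. if n \<in> Ns then Some (ans S n (store n W) (qry S n k)) else None)"

definition pir_joint ::
  "nat \<Rightarrow> nat \<Rightarrow> (nat \<Rightarrow> bool list list \<Rightarrow> 's) \<Rightarrow> ('k,'q,'s,'a) pir \<Rightarrow> nat \<Rightarrow> nat
     \<Rightarrow> (bool list list \<times> 'q \<times> 'a) pmf" where
  "pir_joint K L store S \<theta> n =
     map_pmf (\<lambda>(W, k). (W, qry S n k, ans S n (store n W) (qry S n k)))
       (pair_pmf (msg_pmf K L) (key S \<theta>))"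

definition is_pir_scheme ::
  "nat \<Rightarrow> nat \<Rightarrow> nat set \<Rightarrow> (nat \<Rightarrow> bool list list \<Rightarrow> 's) \<Rightarrow> ('k,'q,'s,'a) pir \<Rightarrow> bool" where
  "is_pir_scheme K L Ns store S \<longleftrightarrow>
     (\<forall>\<theta><K. \<forall>W\<in>msgs K L. \<forall>k\<in>set_pmf (key S \<theta>).
        dec S \<theta> k (answers Ns store S W k) = W ! \<theta>) \<and>
     (\<forall>n\<in>Ns. \<forall>\<theta><K. \<forall>\<theta>'<K. pir_joint K L store S \<theta> n = pir_joint K L store S \<theta>' n)"

(* expected total number of downloaded bits; sz gives the number of bits of an answer *)
definition download ::
  "nat \<Rightarrow> nat \<Rightarrow> nat set \<Rightarrow> (nat \<Rightarrow> bool list list \<Rightarrow> 's) \<Rightarrow> ('a \<Rightarrow> nat)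
     \<Rightarrow> ('k,'q,'s,'a) pir \<Rightarrow> nat \<Rightarrow> real" where
  "download K L Ns store sz S \<theta> =
     measure_pmf.expectation (pair_pmf (msg_pmf K L) (key S \<theta>))
       (\<lambda>(W, k). real (\<Sum>n\<in>Ns. sz (ans S n (store n W) (qry S n k))))"

definition has_rate ::
  "nat \<Rightarrow> nat \<Rightarrow> nat set \<Rightarrow> (nat \<Rightarrow> bool list list \<Rightarrow> 's) \<Rightarrow> ('a \<Rightarrow> nat)
     \<Rightarrow> ('k,'q,'s,'a) pir \<Rightarrow> real \<Rightarrow> bool" where
  "has_rate K L Ns store sz S R \<longleftrightarrow>
     (\<forall>\<theta><K. download K L Ns store sz S \<theta> > 0 \<and> real L / download K L Ns store sz S \<theta> = R)"

definition full_store :: "nat \<Rightarrow> bool list list \<Rightarrow> bool list list" where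
  "full_store n W = W"

definition is_fs_pir :: "nat \<Rightarrow> nat \<Rightarrow> nat set \<Rightarrow> ('k,'q,bool list list,bool list) pir \<Rightarrow> bool" where
  "is_fs_pir K L Ns S \<longleftrightarrow> is_pir_scheme K L Ns full_store S"

definition fs_has_rate ::
  "nat \<Rightarrow> nat \<Rightarrow> nat set \<Rightarrow> ('k,'q,bool list list,bool list) pir \<Rightarrow> real \<Rightarrow> bool" where
  "fs_has_rate K L Ns S R \<longleftrightarrow> has_rate K L Ns full_store length S R"

definition blk :: "(nat \<Rightarrow> rat) \<Rightarrow> nat \<Rightarrow> nat \<Rightarrow> nat" where
  "blk \<alpha> L f = nat \<lfloor>\<alpha> f * of_nat L\<rfloor>"

definition sub :: "(nat \<Rightarrow> nat) \<Rightarrow> bool list list \<Rightarrow> nat \<Rightarrow> nat \<Rightarrow> bool list" where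
  "sub bl W k f = take (bl f) (drop (\<Sum>g<f. bl g) (W ! k))"

definition comp_store ::
  "nat \<Rightarrow> nat \<Rightarrow> (nat \<Rightarrow> nat) \<Rightarrow> (nat \<Rightarrow> nat set) \<Rightarrow> nat \<Rightarrow> bool list list
     \<Rightarrow> nat \<Rightarrow> bool list list option" where
  "comp_store K F bl NS n W =
     (\<lambda>f. if f < F \<and> n \<in> NS f then Some (map (\<lambda>k. sub bl W k f) [0..<K]) else None)"

(* the resulting scheme: independent runs of the F full-storage schemes, the f-th one on the
   databases in N_f; the answer of DB n is the tuple of its sub-scheme answers *)
definition comp_scheme ::
  "nat \<Rightarrow> (nat \<Rightarrow> nat set) \<Rightarrow> (nat \<Rightarrow> ('k,'q,bool list list,bool list) pir)
     \<Rightarrow> (nat \<Rightarrow> 'k, nat \<Rightarrow> 'q option, nat \<Rightarrow> bool list list option, nat \<Rightarrow> bool list) pir" where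
  "comp_scheme F NS S =
     \<lparr> key = (\<lambda>\<theta>. Pi_pmf {..<F} undefined (\<lambda>f. key (S f) \<theta>)),
       qry = (\<lambda>n k f. if f < F \<and> n \<in> NS f then Some (qry (S f) n (k f)) else None),
       ans = (\<lambda>n c q f. case (c f, q f) of (Some m, Some qq) \<Rightarrow> ans (S f) n m qq | _ \<Rightarrow> []),
       dec = (\<lambda>\<theta> k A. concat (map (\<lambda>f. dec (S f) \<theta> (k f)
                 (\<lambda>n. if n \<in> NS f then map_option (\<lambda>a. a f) (A n) else None)) [0..<F])) \<rparr>"

definition comp_sz :: "nat \<Rightarrow> (nat \<Rightarrow> bool list) \<Rightarrow> nat" where
  "comp_sz F a = (\<Sum>f<F. length (a f))"

end

theory Submission imports Defs begin

lemma pmf_of_set_times: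
  assumes "finite A" "A \<noteq> {}" "finite B" "B \<noteq> {}"
  shows "pmf_of_set (A \<times> B) = pair_pmf (pmf_of_set A) (pmf_of_set B)"
  by (rule pmf_eqI) (auto simp: assms pmf_pair card_cartesian_product indicator_def)

lemma fin_len: "finite {w::bool list. length w = L}"
  using finite_lists_length_eq[of "UNIV::bool set" L] by simp

lemma finite_msgs: "finite (msgs K L)"
proof -
  have "msgs K L = {Ws. set Ws \<subseteq> {w. set w \<subseteq> UNIV \<and> length w = L} \<and> length Ws = K}"
    by (auto simp: msgs_def)
  thus ?thesis using finite_lists_length_eq[OF fin_len[of L], where n=K] by simp
qed

lemma msgs_ne: "msgs K L \<noteq> {}"
  by (auto simp: msgs_def intro!: exI[of _ "replicate K (replicate L False)"])

lemma split3: "w = take a w @ take b (drop a w) @ drop (a+b) w"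
  by (metis append.assoc append_take_drop_id drop_drop add.commute take_add)

lemma marg:
  assumes "a + b \<le> L"
  shows "map_pmf (map (\<lambda>w. take b (drop a w))) (msg_pmf K L) = msg_pmf K b"
proof -
  define c where "c = L - a - b"
  define C where "C = {ps :: (bool list \<times> bool list) list. length ps = K \<and> (\<forall>p\<in>set ps. length (fst p) = a \<and> length (snd p) = c)}"
  define \<phi> where "\<phi> = (\<lambda>W::bool list list. (map (\<lambda>w. take b (drop a w)) W, map (\<lambda>w. (take a w, drop (a+b) w)) W))"
  have finC: "finite C"
  proof -
    have "C = {ps. set ps \<subseteq> {w. set w \<subseteq> UNIV \<and> length w = a} \<times> {w. set w \<subseteq> UNIV \<and> length w = c} \<and> length ps = K}"
      by (auto simp: C_def)
    thus ?thesis using finite_lists_length_eq[OF finite_cartesian_product[OF fin_len[of a] fin_len[of c]], where n=K] by simp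
  qed
  have neC: "C \<noteq> {}"
    by (auto simp: C_def intro!: exI[of _ "replicate K (replicate a False, replicate c False)"])
  have inj: "inj_on \<phi> (msgs K L)"
  proof (rule inj_onI)
    fix W1 W2 assume "W1 \<in> msgs K L" "W2 \<in> msgs K L" "\<phi> W1 = \<phi> W2"
    hence l: "length W1 = length W2" and e1: "map (\<lambda>w. take b (drop a w)) W1 = map (\<lambda>w. take b (drop a w)) W2"
      and e2: "map (\<lambda>w. (take a w, drop (a+b) w)) W1 = map (\<lambda>w. (take a w, drop (a+b) w)) W2"
      by (auto simp: \<phi>_def msgs_def)
    show "W1 = W2"
    proof (rule nth_equalityI[OF l])
      fix i assume i: "i < length W1"
      have "take b (drop a (W1!i)) = take b (drop a (W2!i))"
        using arg_cong[OF e1, of "\<lambda>xs. xs ! i"] i l by simp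
      moreover have "take a (W1!i) = take a (W2!i)" "drop (a+b) (W1!i) = drop (a+b) (W2!i)"
        using arg_cong[OF e2, of "\<lambda>xs. xs ! i"] i l by simp_all
      ultimately show "W1 ! i = W2 ! i"
        by (metis split3)
    qed
  qed
  have img: "\<phi> ` msgs K L = msgs K b \<times> C"
  proof
    show "\<phi> ` msgs K L \<subseteq> msgs K b \<times> C"
      using assms by (auto simp: \<phi>_def msgs_def C_def c_def)
  next
    show "msgs K b \<times> C \<subseteq> \<phi> ` msgs K L"
    proof safe
      fix ms ps assume ms: "ms \<in> msgs K b" and ps: "ps \<in> C"
      define W where "W = map (\<lambda>(m, p). fst p @ m @ snd p) (zip ms ps)"
      have lens: "length ms = K" "length ps = K" using ms ps by (auto simp: msgs_def C_def)
      have el: "\<And>i. i < K \<Longrightarrow> length (ms!i) = b \<and> length (fst (ps!i)) = a \<and> length (snd (ps!i)) = c"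
        using ms ps lens by (auto simp: msgs_def C_def)
      have W: "W \<in> msgs K L"
      proof -
        have "\<And>i. i < K \<Longrightarrow> length (fst (ps!i) @ ms!i @ snd (ps!i)) = L"
          using el assms by (simp add: c_def)
        thus ?thesis using lens by (auto simp: W_def msgs_def in_set_conv_nth split: prod.splits) (metis fst_conv snd_conv)
      qed
      have "\<phi> W = (ms, ps)"
        unfolding \<phi>_def prod.inject
      proof
        show "map (\<lambda>w. take b (drop a w)) W = ms"
          by (rule nth_equalityI) (use lens el in \<open>auto simp: W_def\<close>)
        show "map (\<lambda>w. (take a w, drop (a + b) w)) W = ps"
          by (rule nth_equalityI) (use lens el in \<open>auto simp: W_def prod_eq_iff\<close>)
      qed
      thus "(ms, ps) \<in> \<phi> ` msgs K L" using W by (metis image_eqI)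
    qed
  qed
  have "map_pmf \<phi> (msg_pmf K L) = pair_pmf (msg_pmf K b) (pmf_of_set C)"
    unfolding msg_pmf_def
    by (simp add: map_pmf_of_set_inj[OF inj msgs_ne finite_msgs] img pmf_of_set_times finite_msgs msgs_ne finC neC)
  hence "map_pmf fst (map_pmf \<phi> (msg_pmf K L)) = msg_pmf K b"
    by (simp add: map_fst_pair_pmf)
  thus ?thesis by (simp add: pmf.map_comp o_def \<phi>_def)
qed

lemma concat_blocks:
  "concat (map (\<lambda>f. take (bl f) (drop (\<Sum>g<f. bl g) w)) [0..<F]) = take (\<Sum>g<F. bl g) w"
  by (induction F) (simp_all add: take_add)

lemma Pi_pmf_map_dep:
  assumes "finite A"
  shows "Pi_pmf A d (\<lambda>x. map_pmf (g x) (p x)) = map_pmf (\<lambda>h x. if x \<in> A then g x (h x) else d) (Pi_pmf A d' p)"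
  using assms by (simp add: map_pmf_def Pi_pmf_bind[where d'=d'])


lemma map_qry_pair: "map_pmf (\<lambda>(W, k). g k) (pair_pmf A B) = map_pmf g B"
proof -
  have "map_pmf (\<lambda>(W, k). g k) (pair_pmf A B) = map_pmf (g \<circ> snd) (pair_pmf A B)"
    by (rule map_pmf_cong) auto
  thus ?thesis by (simp add: pmf.map_comp[symmetric] map_snd_pair_pmf)
qed

lemma qry_marg:
  assumes "pir_joint K L store S \<theta> n = pir_joint K L store S \<theta>' n"
  shows "map_pmf (qry S n) (key S \<theta>) = map_pmf (qry S n) (key S \<theta>')"
proof -
  have e: "map_pmf (\<lambda>x. fst (snd x)) (pir_joint K L store S t n) = map_pmf (qry S n) (key S t)" for t
    unfolding pir_joint_def pmf.map_comp o_def
    by (subst map_qry_pair[symmetric]) (rule map_pmf_cong, auto)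
  show ?thesis using e[of \<theta>] e[of \<theta>'] assms by simp
qed

theorem theorem1:
  fixes N K F L :: nat
    and \<alpha> :: "nat \<Rightarrow> rat"
    and NS :: "nat \<Rightarrow> nat set"
    and S :: "nat \<Rightarrow> ('k, 'q, bool list list, bool list) pir"
    and R :: "nat \<Rightarrow> real"
  assumes "N > 0" and "K > 0" and "F > 0"
    and "\<forall>f<F. \<alpha> f > 0"
    and "(\<Sum>f<F. \<alpha> f) = 1"
    and "\<forall>f<F. \<exists>m::nat. m > 0 \<and> \<alpha> f * of_nat L = of_nat m"
    and "\<forall>f<F. NS f \<noteq> {} \<and> NS f \<subseteq> {..<N}"
    and "\<forall>f<F. is_fs_pir K (blk \<alpha> L f) (NS f) (S f)"
    and "\<forall>f<F. fs_has_rate K (blk \<alpha> L f) (NS f) (S f) (R f)"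
  shows "is_pir_scheme K L {..<N} (comp_store K F (blk \<alpha> L) NS) (comp_scheme F NS S)
       \<and> has_rate K L {..<N} (comp_store K F (blk \<alpha> L) NS) (comp_sz F) (comp_scheme F NS S)
           (1 / (\<Sum>f<F. real_of_rat (\<alpha> f) / R f))"
proof -
  define bl where "bl = blk \<alpha> L"
  note A = assms
  have blf: "bl f > 0 \<and> of_nat (bl f) = \<alpha> f * of_nat L" if f: "f < F" for f
  proof -
    obtain m :: nat where m: "m > 0" "\<alpha> f * of_nat L = of_nat m" using A(6) f by blast
    have "bl f = nat \<lfloor>\<alpha> f * of_nat L\<rfloor>" by (simp add: bl_def blk_def)
    also have "\<dots> = m" unfolding m(2) by (simp only: floor_of_nat nat_int)
    finally show ?thesis using m by simp
  qed
  have sumbl: "(\<Sum>f<F. bl f) = L"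
  proof -
    have "(of_nat (\<Sum>f<F. bl f) :: rat) = (\<Sum>f<F. \<alpha> f * of_nat L)"
      by (simp add: blf)
    also have "\<dots> = of_nat L" using A(5) by (simp add: sum_distrib_right[symmetric])
    finally show ?thesis by (simp only: of_nat_eq_iff)
  qed
  have pre: "(\<Sum>g<f. bl g) + bl f \<le> L" if "f < F" for f
  proof -
    have "(\<Sum>g<f. bl g) + bl f = (\<Sum>g<Suc f. bl g)" by simp
    also have "\<dots> \<le> (\<Sum>g<F. bl g)" by (rule sum_mono2) (use that in auto)
    finally show ?thesis using sumbl by simp
  qed
  have Lpos: "L > 0"
  proof -
    have "bl 0 \<le> (\<Sum>f<F. bl f)" by (rule member_le_sum) (use A(3) in auto)
    thus ?thesis using blf[of 0] A(3) sumbl by linarith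
  qed
  define V where "V = (\<lambda>f W. map (\<lambda>k. sub bl W k f) [0..<K])"
  have Vmap: "V f W = map (\<lambda>w. take (bl f) (drop (\<Sum>g<f. bl g) w)) W" if "W \<in> msgs K L" for f W
    using that by (intro nth_equalityI) (auto simp: V_def sub_def msgs_def)
  have Vm: "V f W \<in> msgs K (bl f)" if "W \<in> msgs K L" "f < F" for f W
    using that pre[OF that(2)] by (auto simp: Vmap msgs_def)
  have Vpmf: "map_pmf (V f) (msg_pmf K L) = msg_pmf K (bl f)" if "f < F" for f
  proof -
    have "map_pmf (V f) (msg_pmf K L) = map_pmf (map (\<lambda>w. take (bl f) (drop (\<Sum>g<f. bl g) w))) (msg_pmf K L)"
      by (rule map_pmf_cong) (auto simp: msg_pmf_def finite_msgs msgs_ne Vmap)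
    also have "\<dots> = msg_pmf K (bl f)" by (rule marg) (use pre[OF that] in simp)
    finally show ?thesis .
  qed
  define store where "store = comp_store K F bl NS"
  define CS where "CS = comp_scheme F NS S"
  have keyCS: "key CS \<theta> = Pi_pmf {..<F} undefined (\<lambda>f. key (S f) \<theta>)" for \<theta>
    by (simp add: CS_def comp_scheme_def)
  have comp_ans: "ans CS n (store n W) (qry CS n k) f =
      (if n \<in> NS f then ans (S f) n (V f W) (qry (S f) n (k f)) else [])" if "f < F" for n W k f
    using that by (simp add: CS_def comp_scheme_def store_def comp_store_def V_def)
  have dec_ok: "dec CS \<theta> k (answers {..<N} store CS W k) = W ! \<theta>"
    if th: "\<theta> < K" and W: "W \<in> msgs K L" and k: "k \<in> set_pmf (key CS \<theta>)" for \<theta> W k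
  proof -
    have kf: "k f \<in> set_pmf (key (S f) \<theta>)" if "f < F" for f
      using k that by (auto simp: keyCS set_Pi_pmf PiE_dflt_def)
    have blk_eq: "dec (S f) \<theta> (k f) (\<lambda>n. if n \<in> NS f then map_option (\<lambda>a. a f) (answers {..<N} store CS W k n) else None)
        = take (bl f) (drop (\<Sum>g<f. bl g) (W ! \<theta>))" if f: "f < F" for f
    proof -
      have "(\<lambda>n. if n \<in> NS f then map_option (\<lambda>a. a f) (answers {..<N} store CS W k n) else None)
          = answers (NS f) full_store (S f) (V f W) (k f)"
      proof
        fix n show "(if n \<in> NS f then map_option (\<lambda>a. a f) (answers {..<N} store CS W k n) else None)
          = answers (NS f) full_store (S f) (V f W) (k f) n"
          using A(7) f comp_ans[OF f, of n W k] by (auto simp: answers_def full_store_def)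
      qed
      moreover have "dec (S f) \<theta> (k f) (answers (NS f) full_store (S f) (V f W) (k f)) = V f W ! \<theta>"
        using A(8) f th Vm[OF W f] kf[OF f] by (auto simp: is_fs_pir_def is_pir_scheme_def bl_def)
      moreover have "V f W ! \<theta> = take (bl f) (drop (\<Sum>g<f. bl g) (W ! \<theta>))"
        using th by (simp add: V_def sub_def)
      ultimately show ?thesis by simp
    qed
    have "dec CS \<theta> k (answers {..<N} store CS W k) =
        concat (map (\<lambda>f. take (bl f) (drop (\<Sum>g<f. bl g) (W ! \<theta>))) [0..<F])"
    proof -
      have gen: "dec CS \<theta> k A = concat (map (\<lambda>f. dec (S f) \<theta> (k f)
                 (\<lambda>n. if n \<in> NS f then map_option (\<lambda>a. a f) (A n) else None)) [0..<F])" for A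
        by (simp add: CS_def comp_scheme_def)
      show ?thesis unfolding gen by (rule arg_cong[where f=concat], rule map_cong) (auto simp: blk_eq)
    qed
    also have "\<dots> = W ! \<theta>"
      using W th by (simp add: concat_blocks sumbl msgs_def)
    finally show ?thesis .
  qed
  have priv: "pir_joint K L store CS \<theta> n = pir_joint K L store CS \<theta>' n"
    if n: "n < N" and th: "\<theta> < K" "\<theta>' < K" for n \<theta> \<theta>'
  proof -
    define G where "G = (\<lambda>f x. if n \<in> NS f then Some (qry (S f) n x) else None)"
    have Q: "map_pmf (qry CS n) (key CS t) = Pi_pmf {..<F} None (\<lambda>f. map_pmf (G f) (key (S f) t))" for t
    proof -
      have "Pi_pmf {..<F} None (\<lambda>f. map_pmf (G f) (key (S f) t)) =
          map_pmf (\<lambda>h x. if x \<in> {..<F} then G x (h x) else None) (key CS t)"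
        by (simp add: keyCS Pi_pmf_map_dep[where d'=undefined])
      also have "(\<lambda>h x. if x \<in> {..<F} then G x (h x) else None) = qry CS n"
        by (auto simp: G_def CS_def comp_scheme_def fun_eq_iff)
      finally show ?thesis by (rule sym)
    qed
    have Gf: "map_pmf (G f) (key (S f) \<theta>) = map_pmf (G f) (key (S f) \<theta>')" if f: "f < F" for f
    proof (cases "n \<in> NS f")
      case True
      have "pir_joint K (bl f) full_store (S f) \<theta> n = pir_joint K (bl f) full_store (S f) \<theta>' n"
      proof -
        have "is_fs_pir K (blk \<alpha> L f) (NS f) (S f)" using A(8) f by blast
        hence "is_pir_scheme K (bl f) (NS f) full_store (S f)" unfolding is_fs_pir_def bl_def .
        hence "\<forall>n\<in>NS f. \<forall>\<theta><K. \<forall>\<theta>'<K. pir_joint K (bl f) full_store (S f) \<theta> n = pir_joint K (bl f) full_store (S f) \<theta>' n"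
          unfolding is_pir_scheme_def by (rule conjunct2)
        thus ?thesis using True th by blast
      qed
      from qry_marg[OF this] have "map_pmf Some (map_pmf (qry (S f) n) (key (S f) \<theta>)) =
          map_pmf Some (map_pmf (qry (S f) n) (key (S f) \<theta>'))" by simp
      thus ?thesis using True by (simp add: G_def pmf.map_comp o_def)
    next
      case False
      thus ?thesis by (simp add: G_def map_pmf_const)
    qed
    have QQ: "map_pmf (qry CS n) (key CS \<theta>) = map_pmf (qry CS n) (key CS \<theta>')"
      unfolding Q by (rule Pi_pmf_cong) (auto simp: Gf)
    have pj: "pir_joint K L store CS t n = map_pmf (\<lambda>(W, q). (W, q, ans CS n (store n W) q))
        (pair_pmf (msg_pmf K L) (map_pmf (qry CS n) (key CS t)))" for t
      unfolding pir_joint_def pair_map_pmf2 pmf.map_comp by (rule map_pmf_cong) auto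
    show ?thesis unfolding pj QQ ..
  qed
  define h where "h = (\<lambda>f. (\<lambda>(V, x). real (\<Sum>n\<in>NS f. length (ans (S f) n (full_store n V) (qry (S f) n x)))))"
  define D where "D = (\<lambda>f \<theta>. download K (bl f) (NS f) full_store length (S f) \<theta>)"
  have Dpos: "D f \<theta> > 0" and RD: "real (bl f) / D f \<theta> = R f" if "f < F" "\<theta> < K" for f \<theta>
    using A(9) that by (auto simp: fs_has_rate_def has_rate_def D_def bl_def)
  have Dh: "D f \<theta> = measure_pmf.expectation (pair_pmf (msg_pmf K (bl f)) (key (S f) \<theta>)) (h f)" for f \<theta>
    by (simp add: D_def download_def h_def)
  have dl: "download K L {..<N} store (comp_sz F) CS \<theta> = (\<Sum>f<F. D f \<theta>)" if th: "\<theta> < K" for \<theta>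
  proof -
    define P where "P = pair_pmf (msg_pmf K L) (key CS \<theta>)"
    define \<psi> where "\<psi> = (\<lambda>f (W::bool list list, k::nat \<Rightarrow> 'k). (V f W, k f))"
    have mp: "map_pmf (\<psi> f) P = pair_pmf (msg_pmf K (bl f)) (key (S f) \<theta>)" if f: "f < F" for f
    proof -
      have "map_pmf (\<psi> f) P = pair_pmf (map_pmf (V f) (msg_pmf K L)) (map_pmf (\<lambda>k. k f) (key CS \<theta>))"
        by (simp add: P_def \<psi>_def map_pair[symmetric] case_prod_beta)
      thus ?thesis using f by (simp add: Vpmf keyCS Pi_pmf_component)
    qed
    have intg: "integrable P (\<lambda>x. h f (\<psi> f x))" if f: "f < F" for f
    proof -
      have "integrable (pair_pmf (msg_pmf K (bl f)) (key (S f) \<theta>)) (h f)"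
        using Dpos[OF f th] Dh[of f \<theta>] not_integrable_integral_eq by fastforce
      thus ?thesis using mp[OF f] integrable_map_pmf_eq[of "\<psi> f" P "h f"] by simp
    qed
    have pw: "real (\<Sum>n\<in>{..<N}. comp_sz F (ans CS n (store n W) (qry CS n k))) = (\<Sum>f<F. h f (\<psi> f (W, k)))" for W k
    proof -
      have "(\<Sum>n\<in>{..<N}. comp_sz F (ans CS n (store n W) (qry CS n k)))
          = (\<Sum>f<F. \<Sum>n<N. length (ans CS n (store n W) (qry CS n k) f))"
        by (simp add: comp_sz_def sum.swap[of _ "{..<N}"])
      also have "\<dots> = (\<Sum>f<F. \<Sum>n\<in>NS f. length (ans (S f) n (V f W) (qry (S f) n (k f))))"
      proof (rule sum.cong[OF refl])
        fix f assume "f \<in> {..<F}"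
        hence f: "f < F" by simp
        have "(\<Sum>n<N. length (ans CS n (store n W) (qry CS n k) f)) =
            (\<Sum>n<N. if n \<in> NS f then length (ans (S f) n (V f W) (qry (S f) n (k f))) else 0)"
          by (rule sum.cong) (auto simp: comp_ans[OF f])
        also have "\<dots> = (\<Sum>n\<in>{..<N} \<inter> NS f. length (ans (S f) n (V f W) (qry (S f) n (k f))))"
          by (simp add: sum.inter_restrict)
        also have "{..<N} \<inter> NS f = NS f" using A(7) f by auto
        finally show "(\<Sum>n<N. length (ans CS n (store n W) (qry CS n k) f)) =
            (\<Sum>n\<in>NS f. length (ans (S f) n (V f W) (qry (S f) n (k f))))" .
      qed
      finally show ?thesis by (simp add: h_def \<psi>_def full_store_def)
    qed
    have "download K L {..<N} store (comp_sz F) CS \<theta> = measure_pmf.expectation P (\<lambda>x. \<Sum>f<F. h f (\<psi> f x))"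
      unfolding download_def P_def by (rule Bochner_Integration.integral_cong[OF refl]) (simp only: split_paired_all prod.case pw)
    also have "\<dots> = (\<Sum>f<F. measure_pmf.expectation P (\<lambda>x. h f (\<psi> f x)))"
      by (rule Bochner_Integration.integral_sum) (simp add: intg)
    also have "\<dots> = (\<Sum>f<F. D f \<theta>)"
    proof (rule sum.cong[OF refl])
      fix f assume "f \<in> {..<F}"
      hence f: "f < F" by simp
      have "measure_pmf.expectation P (\<lambda>x. h f (\<psi> f x)) = measure_pmf.expectation (map_pmf (\<psi> f) P) (h f)"
        by simp
      thus "measure_pmf.expectation P (\<lambda>x. h f (\<psi> f x)) = D f \<theta>" by (simp add: mp[OF f] Dh)
    qed
    finally show ?thesis .
  qed
  have part1: "is_pir_scheme K L {..<N} store CS"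
    unfolding is_pir_scheme_def
  proof (intro conjI allI impI ballI)
    fix \<theta> W k assume "\<theta> < K" "W \<in> msgs K L" "k \<in> set_pmf (key CS \<theta>)"
    thus "dec CS \<theta> k (answers {..<N} store CS W k) = W ! \<theta>" by (rule dec_ok)
  next
    fix n \<theta> \<theta>' assume "n \<in> {..<N}" "\<theta> < K" "\<theta>' < K"
    thus "pir_joint K L store CS \<theta> n = pir_joint K L store CS \<theta>' n" by (intro priv) simp_all
  qed
  have part2: "has_rate K L {..<N} store (comp_sz F) CS (1 / (\<Sum>f<F. real_of_rat (\<alpha> f) / R f))"
    unfolding has_rate_def
  proof (intro allI impI conjI)
    fix \<theta> assume th: "\<theta> < K"
    have pos: "(\<Sum>f<F. D f \<theta>) > 0"
      by (rule sum_pos) (use A(3) Dpos th in auto)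
    thus "download K L {..<N} store (comp_sz F) CS \<theta> > 0" by (simp add: dl[OF th])
    have trm: "real_of_rat (\<alpha> f) / R f = D f \<theta> / real L" if f: "f < F" for f
    proof -
      have "real_of_rat (of_nat (bl f)) = real_of_rat (\<alpha> f * of_nat L)" using blf[OF f] by simp
      hence a: "real (bl f) = real_of_rat (\<alpha> f) * real L" by (simp add: of_rat_mult)
      have al: "real_of_rat (\<alpha> f) = real (bl f) / real L" using a Lpos by simp
      have bp: "real (bl f) > 0" using blf[OF f] by simp
      have "real_of_rat (\<alpha> f) / R f = (real (bl f) / real L) / (real (bl f) / D f \<theta>)"
        by (simp only: al RD[OF f th, symmetric])
      also have "\<dots> = D f \<theta> / real L" using bp Dpos[OF f th] by simp
      finally show ?thesis .
    qed
    have "(\<Sum>f<F. real_of_rat (\<alpha> f) / R f) = (\<Sum>f<F. D f \<theta>) / real L"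
      by (simp add: trm sum_divide_distrib)
    thus "real L / download K L {..<N} store (comp_sz F) CS \<theta> = 1 / (\<Sum>f<F. real_of_rat (\<alpha> f) / R f)"
      using pos Lpos by (simp add: dl[OF th])
  qed
  show ?thesis using part1 part2 by (simp add: store_def CS_def bl_def)
qed

end
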